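(* Let $S$ be a finite set of at least three points in the plane and $v>1$. Let $C$ be a smallest enclosing cross for $S$ and let the median highways $h_1,h_2$ be the middle lines of the two strips of $C$. Then the travel-time diameter $\delta_{\mathrm{med}}$ of $S$ for the speed-$v$ highway cross $h_1\cup h_2$ satisfies $\delta_{\mathrm{med}}\le(2+1/v)\,\delta_{\mathrm{opt}}$, where $\delta_{\mathrm{opt}}$ is the travel-time diameter of $S$ for an optimal axis-aligned speed-$v$ highway cross. Moreover, for every $v\ge\sqrt3$ there are point sets $S$ for which $\delta_{\mathrm{med}}\ge(2-1/(v+2))\,\delta_{\mathrm{opt}}$.
   Context: The underlying metric is the $L_1$-metric. An axis-aligned highway cross is the union $H$ of a horizontal and a vertical line; one travels with speed $1$ off $H$ ($L_1$-lengths) and with speed $v$ along either line of $H$. The travel time $t_H(p,q)$ is the minimum time of a path from $p$ to $q$, and the travel-time diameter of $S$ is $\max_{p,q\in S}t_H(p,q)$; an optimal axis-aligned highway cross minimizes it. An enclosing cross of $S$ is the union of a horizontal strip and a vertical strip (closed regions between two parallel lines) of equal width containing $S$; a smallest enclosing cross has minimum width. The middle line of a strip is the line halfway between its boundary lines. *)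

theory Defs
  imports Complex_Main
begin

type_synonym point = "real \<times> real"

definition l1dist :: "point \<Rightarrow> point \<Rightarrow> real" where
  "l1dist p q = \<bar>fst p - fst q\<bar> + \<bar>snd p - snd q\<bar>"

text \<open>Axis-aligned highway cross with vertical line x = a and horizontal line y = b.\<close>
definition step_time :: "real \<Rightarrow> real \<Rightarrow> real \<Rightarrow> point \<Rightarrow> point \<Rightarrow> real" where
  "step_time v a b p q =
     (if (fst p = a \<and> fst q = a) \<or> (snd p = b \<and> snd q = b)
      then min (l1dist p q) (l1dist p q / v) else l1dist p q)"

definition path_time :: "real \<Rightarrow> real \<Rightarrow> real \<Rightarrow> point list \<Rightarrow> real" where
  "path_time v a b ps = sum_list (map2 (step_time v a b) ps (tl ps))"

definition travel_time :: "real \<Rightarrow> real \<Rightarrow> real \<Rightarrow> point \<Rightarrow> point \<Rightarrow> real" where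
  "travel_time v a b p q =
     Inf {path_time v a b ps | ps. ps \<noteq> [] \<and> hd ps = p \<and> last ps = q}"

definition tt_diameter :: "real \<Rightarrow> real \<Rightarrow> real \<Rightarrow> point set \<Rightarrow> real" where
  "tt_diameter v a b S = Max {travel_time v a b p q | p q. p \<in> S \<and> q \<in> S}"

definition opt_diameter :: "real \<Rightarrow> point set \<Rightarrow> real" where
  "opt_diameter v S = Inf {tt_diameter v a b S | a b. True}"

definition enclosing_cross :: "point set \<Rightarrow> real \<Rightarrow> real \<Rightarrow> real \<Rightarrow> bool" where
  "enclosing_cross S d c w \<longleftrightarrow> w \<ge> 0 \<and>
     (\<forall>p\<in>S. (d \<le> fst p \<and> fst p \<le> d + w) \<or> (c \<le> snd p \<and> snd p \<le> c + w))"

definition smallest_enclosing_cross :: "point set \<Rightarrow> real \<Rightarrow> real \<Rightarrow> real \<Rightarrow> bool" where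
  "smallest_enclosing_cross S d c w \<longleftrightarrow> enclosing_cross S d c w \<and>
     (\<forall>d' c' w'. enclosing_cross S d' c' w' \<longrightarrow> w \<le> w')"

end

theory Submission
  imports Defs
begin



lemma path_time_Cons2: "path_time v a b (x # y # rest) = step_time v a b x y + path_time v a b (y # rest)"
  by (simp add: path_time_def)
lemma path_time_single: "path_time v a b [x] = 0"
  by (simp add: path_time_def)

lemma l1dist_nonneg: "l1dist p q \<ge> 0" by (simp add: l1dist_def)
lemma l1dist_tri: "l1dist p r \<le> l1dist p q + l1dist q r" by (simp add: l1dist_def)
lemma l1dist_sym: "l1dist p q = l1dist q p" by (simp add: l1dist_def)

lemma step_nonneg: "v > 0 \<Longrightarrow> step_time v a b p q \<ge> 0"
  by (simp add: step_time_def l1dist_nonneg)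
lemma step_le: "step_time v a b p q \<le> l1dist p q"
  by (simp add: step_time_def)
lemma step_ge: "v \<ge> 1 \<Longrightarrow> step_time v a b p q \<ge> l1dist p q / v"
proof -
  assume v: "v \<ge> 1"
  have "l1dist p q / v \<le> l1dist p q" using v l1dist_nonneg[of p q]
    by (simp add: divide_le_eq mult_le_cancel_left1)  
  thus ?thesis by (simp add: step_time_def)
qed
lemma step_hw: "v > 0 \<Longrightarrow> (fst p = a \<and> fst q = a) \<or> (snd p = b \<and> snd q = b) \<Longrightarrow> step_time v a b p q \<le> l1dist p q / v"
  by (simp add: step_time_def)

lemma path_nonneg: "v > 0 \<Longrightarrow> path_time v a b ps \<ge> 0"
  unfolding path_time_def
  by (induction ps rule: induct_list012) (auto simp: step_nonneg add_nonneg_nonneg)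

lemma path_lower:
  assumes tri: "\<And>x y z. L x z \<le> L x y + L y z"
    and st: "\<And>x y. L x y \<le> step_time v a b x y"
    and refl: "\<And>x. L x x \<le> 0"
  shows "ps \<noteq> [] \<Longrightarrow> L (hd ps) (last ps) \<le> path_time v a b ps"
proof (induction ps)
  case Nil then show ?case by simp
next
  case (Cons x zs)
  show ?case
  proof (cases zs)
    case Nil then show ?thesis using refl[of x] by (simp add: path_time_single)
  next
    case (Cons y ys)
    have "L x (last zs) \<le> L x y + L y (last zs)" by (rule tri)
    also have "\<dots> \<le> step_time v a b x y + path_time v a b zs"
      using st[of x y] Cons.IH Cons by simp
    finally show ?thesis using Cons by (simp add: path_time_Cons2)
  qed
qed

lemma tt_set_ne: "{path_time v a b ps | ps. ps \<noteq> [] \<and> hd ps = p \<and> last ps = q} \<noteq> {}"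
proof -
  have "path_time v a b [p,q] \<in> {path_time v a b ps | ps. ps \<noteq> [] \<and> hd ps = p \<and> last ps = q}" by force
  thus ?thesis by blast
qed

lemma travel_lower:
  assumes tri: "\<And>x y z. L x z \<le> L x y + L y z"
    and st: "\<And>x y. L x y \<le> step_time v a b x y"
    and refl: "\<And>x. L x x \<le> 0"
  shows "L p q \<le> travel_time v a b p q"
  unfolding travel_time_def
  apply (rule cInf_greatest[OF tt_set_ne])
  using path_lower[OF tri st refl] by force

lemma travel_upper:
  assumes "v > 0" "ps \<noteq> []" "hd ps = p" "last ps = q"
  shows "travel_time v a b p q \<le> path_time v a b ps"
  unfolding travel_time_def
  apply (rule cInf_lower)
  using assms apply blast
  unfolding bdd_below_def using path_nonneg[OF assms(1)] by blast

lemma travel_nonneg: "v > 0 \<Longrightarrow> travel_time v a b p q \<ge> 0"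
  unfolding travel_time_def
  apply (rule cInf_greatest[OF tt_set_ne]) using path_nonneg by blast




lemma path3: "path_time v a b [p1,p2,p3,p4] = step_time v a b p1 p2 + step_time v a b p2 p3 + step_time v a b p3 p4"
  by (simp add: path_time_def)
lemma path4: "path_time v a b [p1,p2,p3,p4,p5] = step_time v a b p1 p2 + step_time v a b p2 p3 + step_time v a b p3 p4 + step_time v a b p4 p5"
  by (simp add: path_time_def)

lemma div_mono_aux: "v > 0 \<Longrightarrow> x \<le> y \<Longrightarrow> x / v \<le> y / (v::real)"
  by (simp add: divide_right_mono)

lemma med_VV:
  assumes v: "v > 1" and p: "\<bar>fst p - a\<bar> \<le> h" and q: "\<bar>fst q - a\<bar> \<le> h"
  shows "travel_time v a b p q \<le> 2*h + (2*h + l1dist p q)/v"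
proof -
  obtain px py qx qy where P: "p = (px,py)" and Q: "q = (qx,qy)" by (cases p, cases q) auto
  have "travel_time v a b p q \<le> path_time v a b [p, (a,py), (a,qy), q]"
    by (rule travel_upper) (use v P Q in auto)
  also have "\<dots> \<le> \<bar>px - a\<bar> + \<bar>py - qy\<bar>/v + \<bar>qx - a\<bar>"
    unfolding path3 using step_le[of v a b p "(a,py)"] step_hw[of v "(a,py)" a "(a,qy)" b]
      step_le[of v a b "(a,qy)" q] v P Q by (simp add: l1dist_def abs_minus_commute)
  also have "\<dots> \<le> 2*h + (2*h + l1dist p q)/v"
  proof -
    have "\<bar>py - qy\<bar>/v \<le> (2*h + l1dist p q)/v" using p v P Q
      by (intro div_mono_aux) (auto simp: l1dist_def)
    thus ?thesis using p q P Q by simp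
  qed
  finally show ?thesis .
qed

lemma med_HH:
  assumes v: "v > 1" and p: "\<bar>snd p - b\<bar> \<le> h" and q: "\<bar>snd q - b\<bar> \<le> h"
  shows "travel_time v a b p q \<le> 2*h + (2*h + l1dist p q)/v"
proof -
  obtain px py qx qy where P: "p = (px,py)" and Q: "q = (qx,qy)" by (cases p, cases q) auto
  have "travel_time v a b p q \<le> path_time v a b [p, (px,b), (qx,b), q]"
    by (rule travel_upper) (use v P Q in auto)
  also have "\<dots> \<le> \<bar>py - b\<bar> + \<bar>px - qx\<bar>/v + \<bar>qy - b\<bar>"
    unfolding path3 using step_le[of v a b p "(px,b)"] step_hw[of v "(px,b)" a "(qx,b)" b]
      step_le[of v a b "(qx,b)" q] v P Q by (simp add: l1dist_def abs_minus_commute)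
  also have "\<dots> \<le> 2*h + (2*h + l1dist p q)/v"
  proof -
    have "\<bar>px - qx\<bar>/v \<le> (2*h + l1dist p q)/v" using p v P Q
      by (intro div_mono_aux) (auto simp: l1dist_def)
    thus ?thesis using p q P Q by simp
  qed
  finally show ?thesis .
qed

lemma med_VH:
  assumes v: "v > 1" and p: "\<bar>fst p - a\<bar> \<le> h" and q: "\<bar>snd q - b\<bar> \<le> h"
  shows "travel_time v a b p q \<le> 2*h + (2*h + l1dist p q)/v"
proof -
  obtain px py qx qy where P: "p = (px,py)" and Q: "q = (qx,qy)" by (cases p, cases q) auto
  have "travel_time v a b p q \<le> path_time v a b [p, (a,py), (a,b), (qx,b), q]"
    by (rule travel_upper) (use v P Q in auto)
  also have "\<dots> \<le> \<bar>px - a\<bar> + \<bar>py - b\<bar>/v + \<bar>a - qx\<bar>/v + \<bar>qy - b\<bar>"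
    unfolding path4 using step_le[of v a b p "(a,py)"] step_hw[of v "(a,py)" a "(a,b)" b]
      step_hw[of v "(a,b)" a "(qx,b)" b]
      step_le[of v a b "(qx,b)" q] v P Q by (simp add: l1dist_def abs_minus_commute)
  also have "\<dots> \<le> 2*h + (2*h + l1dist p q)/v"
  proof -
    have "(\<bar>py - b\<bar> + \<bar>a - qx\<bar>)/v \<le> (2*h + l1dist p q)/v" using p q v P Q
      by (intro div_mono_aux) (auto simp: l1dist_def)
    thus ?thesis using p q P Q by (simp add: add_divide_distrib)
  qed
  finally show ?thesis .
qed

lemma travel_sym: "travel_time v a b p q = travel_time v a b q p"
proof -
  have "{path_time v a b ps | ps. ps \<noteq> [] \<and> hd ps = p \<and> last ps = q}
     = {path_time v a b ps | ps. ps \<noteq> [] \<and> hd ps = q \<and> last ps = p}"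
  proof -
    have rev: "path_time v a b (rev ps) = path_time v a b ps" for ps
    proof (induction ps rule: rev_induct)
      case Nil then show ?case by simp
    next
      case (snoc x xs)
      show ?case
      proof (cases xs rule: rev_cases)
        case Nil then show ?thesis by (simp add: path_time_def)
      next
        case (snoc ys y)
        have e1: "path_time v a b (xs @ [x]) = path_time v a b xs + step_time v a b y x"
          unfolding snoc
          by (induction ys rule: induct_list012) (auto simp: path_time_def)
        have "path_time v a b (rev (xs @ [x])) = step_time v a b x y + path_time v a b (rev xs)"
          using snoc by (simp add: path_time_Cons2)
        moreover have "step_time v a b x y = step_time v a b y x"
          by (auto simp: step_time_def l1dist_sym)
        ultimately show ?thesis using e1 snoc.IH by simp
      qed
    qed
    show ?thesis
      apply (rule set_eqI, rule iffI)
       apply (clarsimp, rule_tac x="rev ps" in exI, simp add: rev hd_rev last_rev)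
      apply (clarsimp, rule_tac x="rev ps" in exI, simp add: rev hd_rev last_rev)
      done
  qed
  thus ?thesis by (simp add: travel_time_def)
qed

lemma med_any:
  assumes v: "v > 1" and p: "\<bar>fst p - a\<bar> \<le> h \<or> \<bar>snd p - b\<bar> \<le> h"
    and q: "\<bar>fst q - a\<bar> \<le> h \<or> \<bar>snd q - b\<bar> \<le> h"
  shows "travel_time v a b p q \<le> 2*h + (2*h + l1dist p q)/v"
proof -
  have "l1dist q p = l1dist p q" by (rule l1dist_sym)
  then show ?thesis using p q med_VV[OF v] med_HH[OF v] med_VH[OF v] med_VH[OF v, of q a h p b] travel_sym
    by metis
qed



definition hw :: "real \<Rightarrow> real \<Rightarrow> point set" where
  "hw a b = {u. fst u = a \<or> snd u = b}"

definition cost :: "real \<Rightarrow> point \<Rightarrow> point \<Rightarrow> point \<Rightarrow> point \<Rightarrow> real" where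
  "cost v p u w q = l1dist p u + l1dist u w / v + l1dist w q"

definition GG :: "real \<Rightarrow> real \<Rightarrow> real \<Rightarrow> point \<Rightarrow> point \<Rightarrow> real" where
  "GG v a b p q = Inf {cost v p u w q | u w. u \<in> hw a b \<and> w \<in> hw a b}"

definition Lx :: "real \<Rightarrow> real \<Rightarrow> real \<Rightarrow> point \<Rightarrow> point \<Rightarrow> real" where
  "Lx v a b p q = min (l1dist p q) (GG v a b p q)"

lemma cost_nonneg: "v > 0 \<Longrightarrow> cost v p u w q \<ge> 0"
  unfolding cost_def using l1dist_nonneg[of p u] l1dist_nonneg[of u w] l1dist_nonneg[of w q]
  by simp

lemma GG_set_ne: "{cost v p u w q | u w. u \<in> hw a b \<and> w \<in> hw a b} \<noteq> {}"
proof -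
  have "(a,b) \<in> hw a b" by (simp add: hw_def)
  thus ?thesis by blast
qed

lemma GG_le: "v > 0 \<Longrightarrow> u \<in> hw a b \<Longrightarrow> w \<in> hw a b \<Longrightarrow> GG v a b p q \<le> cost v p u w q"
  unfolding GG_def
  apply (rule cInf_lower)
   apply blast
  unfolding bdd_below_def using cost_nonneg by blast

lemma GG_ge: "(\<And>u w. u \<in> hw a b \<Longrightarrow> w \<in> hw a b \<Longrightarrow> c \<le> cost v p u w q) \<Longrightarrow> c \<le> GG v a b p q"
  unfolding GG_def
  apply (rule cInf_greatest[OF GG_set_ne]) by blast

lemma GG_tri1:
  assumes v: "v > 0"
  shows "GG v a b p s \<le> l1dist p q + GG v a b q s"
proof -
  have "GG v a b p s - l1dist p q \<le> GG v a b q s"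
  proof (rule GG_ge)
    fix u w assume "u \<in> hw a b" "w \<in> hw a b"
    hence "GG v a b p s \<le> cost v p u w s" using GG_le v by blast
    also have "\<dots> \<le> l1dist p q + cost v q u w s"
      unfolding cost_def using l1dist_tri[of p u q] by simp
    finally show "GG v a b p s - l1dist p q \<le> cost v q u w s" by simp
  qed
  thus ?thesis by simp
qed

lemma GG_tri2:
  assumes v: "v > 0"
  shows "GG v a b p s \<le> GG v a b p q + l1dist q s"
proof -
  have "GG v a b p s - l1dist q s \<le> GG v a b p q"
  proof (rule GG_ge)
    fix u w assume "u \<in> hw a b" "w \<in> hw a b"
    hence "GG v a b p s \<le> cost v p u w s" using GG_le v by blast
    also have "\<dots> \<le> cost v p u w q + l1dist q s"
      unfolding cost_def using l1dist_tri[of w s q] by simp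
    finally show "GG v a b p s - l1dist q s \<le> cost v p u w q" by simp
  qed
  thus ?thesis by simp
qed

lemma GG_tri3:
  assumes v: "v \<ge> 1"
  shows "GG v a b p s \<le> GG v a b p q + GG v a b q s"
proof -
  have main: "GG v a b p s - cost v q u' w' s \<le> GG v a b p q"
    if u': "u' \<in> hw a b" and w': "w' \<in> hw a b" for u' w'
  proof (rule GG_ge)
    fix u w assume u: "u \<in> hw a b" and w: "w \<in> hw a b"
    have "GG v a b p s \<le> cost v p u w' s" using GG_le v u w' by simp
    also have "\<dots> \<le> cost v p u w q + cost v q u' w' s"
    proof -
      have t1: "l1dist u w' \<le> l1dist u w + l1dist w u' + l1dist u' w'"
        using l1dist_tri[of u w' w] l1dist_tri[of w w' u'] by simp
      have t2: "l1dist w u' \<le> l1dist w q + l1dist q u'" by (rule l1dist_tri)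
      have "l1dist u w' / v \<le> (l1dist u w + l1dist w u' + l1dist u' w') / v"
        using t1 v by (simp add: divide_right_mono)
      also have "\<dots> = l1dist u w / v + l1dist w u' / v + l1dist u' w' / v"
        by (simp add: add_divide_distrib)
      finally have t3: "l1dist u w' / v \<le> l1dist u w / v + l1dist w u' / v + l1dist u' w' / v" .
      have t4: "l1dist w u' / v \<le> l1dist w u'"
        using v l1dist_nonneg[of w u'] by (simp add: divide_le_eq mult_le_cancel_left1)
      show ?thesis unfolding cost_def using t2 t3 t4 by simp
    qed
    finally show "GG v a b p s - cost v q u' w' s \<le> cost v p u w q" by simp
  qed
  have "GG v a b p s - GG v a b p q \<le> GG v a b q s"
    apply (rule GG_ge) using main by fastforce
  thus ?thesis by simp
qed

lemma Lx_tri: "v \<ge> 1 \<Longrightarrow> Lx v a b p s \<le> Lx v a b p q + Lx v a b q s"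
  unfolding Lx_def
  using GG_tri1[of v a b p s q] GG_tri2[of v a b p s q] GG_tri3[of v a b p s q] l1dist_tri[of p s q]
  by (simp add: min_def split: if_splits)

lemma Lx_step: "v \<ge> 1 \<Longrightarrow> Lx v a b x y \<le> step_time v a b x y"
proof -
  assume v: "v \<ge> 1"
  show ?thesis
  proof (cases "(fst x = a \<and> fst y = a) \<or> (snd x = b \<and> snd y = b)")
    case True
    hence "x \<in> hw a b" "y \<in> hw a b" by (auto simp: hw_def)
    hence "GG v a b x y \<le> cost v x x y y" using GG_le v by simp
    hence "GG v a b x y \<le> l1dist x y / v" by (simp add: cost_def l1dist_def)
    thus ?thesis using True by (simp add: Lx_def step_time_def)
  next
    case False
    hence "step_time v a b x y = l1dist x y" unfolding step_time_def by presburger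
    thus ?thesis by (simp add: Lx_def)
  qed
qed

lemma Lx_refl: "Lx v a b x x \<le> 0"
  by (simp add: Lx_def l1dist_def)

lemma travel_ge_Lx: "v \<ge> 1 \<Longrightarrow> Lx v a b p q \<le> travel_time v a b p q"
  by (rule travel_lower[where L="Lx v a b"]) (auto intro: Lx_tri Lx_step Lx_refl)

lemma GG_ge_div: "v \<ge> 1 \<Longrightarrow> l1dist p q / v \<le> GG v a b p q"
proof (rule GG_ge)
  fix u w assume v: "v \<ge> 1"
  have "l1dist p q \<le> l1dist p u + l1dist u w + l1dist w q"
    using l1dist_tri[of p q u] l1dist_tri[of u q w] by simp
  hence "l1dist p q / v \<le> (l1dist p u + l1dist u w + l1dist w q) / v" using v
    by (simp add: divide_right_mono)
  also have "\<dots> = l1dist p u / v + l1dist u w / v + l1dist w q / v" by (simp add: add_divide_distrib)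
  also have "\<dots> \<le> cost v p u w q" unfolding cost_def
    using v l1dist_nonneg[of p u] l1dist_nonneg[of w q]
    by (simp add: divide_le_eq mult_le_cancel_left1 add_mono)
  finally show "l1dist p q / v \<le> cost v p u w q" .
qed

definition rr :: "real \<Rightarrow> real \<Rightarrow> point \<Rightarrow> real" where
  "rr a b p = min \<bar>fst p - a\<bar> \<bar>snd p - b\<bar>"

lemma GG_ge_rr: "v \<ge> 1 \<Longrightarrow> rr a b p + rr a b q \<le> GG v a b p q"
proof (rule GG_ge)
  fix u w assume v: "v \<ge> 1" and u: "u \<in> hw a b" and w: "w \<in> hw a b"
  have "rr a b p \<le> l1dist p u" using u by (auto simp: rr_def hw_def l1dist_def)
  moreover have "rr a b q \<le> l1dist w q" using w by (auto simp: rr_def hw_def l1dist_def)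
  moreover have "l1dist u w / v \<ge> 0" using v l1dist_nonneg[of u w] by simp
  ultimately show "rr a b p + rr a b q \<le> cost v p u w q" by (simp add: cost_def)
qed

lemma travel_ge_div: "v \<ge> 1 \<Longrightarrow> l1dist p q / v \<le> travel_time v a b p q"
proof -
  assume v: "v \<ge> 1"
  have "l1dist p q / v \<le> l1dist p q" using v l1dist_nonneg[of p q]
    by (simp add: divide_le_eq mult_le_cancel_left1)
  hence "l1dist p q / v \<le> Lx v a b p q" using GG_ge_div[OF v] by (simp add: Lx_def)
  thus ?thesis using travel_ge_Lx[OF v, of a b p q] by linarith
qed

lemma travel_ge_rr: "v \<ge> 1 \<Longrightarrow> min (l1dist p q) (rr a b p + rr a b q) \<le> travel_time v a b p q"
proof -
  assume v: "v \<ge> 1"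
  have "min (l1dist p q) (rr a b p + rr a b q) \<le> Lx v a b p q"
    using GG_ge_rr[OF v, of a b p q] by (simp add: Lx_def min_def)
  thus ?thesis using travel_ge_Lx[OF v, of a b p q] by linarith
qed




lemma cover_aux:
  fixes x0 y0 x y a b R D :: real
  assumes "min \<bar>x0-a\<bar> \<bar>y0-b\<bar> = R" "min \<bar>x-a\<bar> \<bar>y-b\<bar> \<le> R"
    "min (\<bar>x0-x\<bar> + \<bar>y0-y\<bar>) (R + min \<bar>x-a\<bar> \<bar>y-b\<bar>) \<le> D" "D < 2*R"
  shows "((if x0 \<ge> a then a-(D-R) else a-R) \<le> x \<and> x \<le> (if x0 \<ge> a then a-(D-R) else a-R) + D)
       \<or> ((if y0 \<ge> b then b-(D-R) else b-R) \<le> y \<and> y \<le> (if y0 \<ge> b then b-(D-R) else b-R) + D)"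
  using assms by (smt (verit))


lemma cover_aux0: fixes x y a b D :: real
  assumes "min \<bar>x - a\<bar> \<bar>y - b\<bar> \<le> D/2"
  shows "(a - D/2 \<le> x \<and> x \<le> a - D/2 + D) \<or> (b - D/2 \<le> y \<and> y \<le> b - D/2 + D)"
proof (cases "\<bar>x - a\<bar> \<le> \<bar>y - b\<bar>")
  case True
  hence "\<bar>x - a\<bar> \<le> D/2" using assms by (simp add: min_def)
  thus ?thesis using abs_ge_self[of "x-a"] abs_ge_minus_self[of "x-a"] by linarith
next
  case False
  hence "\<bar>y - b\<bar> \<le> D/2" using assms by (simp add: min_def)
  thus ?thesis using abs_ge_self[of "y-b"] abs_ge_minus_self[of "y-b"] by linarith
qed

lemma tt_set_finite: "finite S \<Longrightarrow> finite {travel_time v a b p q | p q. p \<in> S \<and> q \<in> S}"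
  by (rule finite_image_set2) auto

lemma tt_diam_ge: "finite S \<Longrightarrow> p \<in> S \<Longrightarrow> q \<in> S \<Longrightarrow> travel_time v a b p q \<le> tt_diameter v a b S"
  unfolding tt_diameter_def
  apply (rule Max_ge[OF tt_set_finite], assumption) by blast

lemma tt_diam_le: "finite S \<Longrightarrow> S \<noteq> {} \<Longrightarrow> (\<And>p q. p \<in> S \<Longrightarrow> q \<in> S \<Longrightarrow> travel_time v a b p q \<le> M)
   \<Longrightarrow> tt_diameter v a b S \<le> M"
  unfolding tt_diameter_def
  apply (rule Max.boundedI[OF tt_set_finite], assumption)
   apply blast
  by blast

lemma w_le:
  assumes fin: "finite S" and ne: "S \<noteq> {}" and v: "v \<ge> 1"
    and sm: "smallest_enclosing_cross S d c w"
  shows "w \<le> tt_diameter v a b S"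
proof -
  define D where "D = tt_diameter v a b S"
  have Dp: "min (l1dist p q) (rr a b p + rr a b q) \<le> D" if "p \<in> S" "q \<in> S" for p q
    using travel_ge_rr[OF v, of p q a b] tt_diam_ge[OF fin that, of v a b] D_def by linarith
  obtain p1 where p1: "p1 \<in> S" using ne by blast
  have D0: "D \<ge> 0"
    using travel_nonneg[of v a b p1 p1] v tt_diam_ge[OF fin p1 p1, of v a b] D_def by linarith
  define R where "R = Max (rr a b ` S)"
  have Rge: "rr a b p \<le> R" if "p \<in> S" for p
    unfolding R_def using fin that by simp
  have "R \<in> rr a b ` S" unfolding R_def by (rule Max_in) (use fin ne in auto)
  then obtain p0 where p0: "p0 \<in> S" "rr a b p0 = R" by (metis imageE)
  have "\<exists>d' c'. enclosing_cross S d' c' D"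
  proof (cases "2*R \<le> D")
    case True
    have "enclosing_cross S (a - D/2) (b - D/2) D"
      unfolding enclosing_cross_def
    proof (intro conjI ballI)
      show "0 \<le> D" by (rule D0)
      fix p assume "p \<in> S"
      hence "rr a b p \<le> D/2" using Rge[of p] True by linarith
      thus "a - D / 2 \<le> fst p \<and> fst p \<le> a - D / 2 + D \<or> b - D / 2 \<le> snd p \<and> snd p \<le> b - D / 2 + D"
        unfolding rr_def using cover_aux0 by blast
    qed
    thus ?thesis by blast
  next
    case False
    define d' where "d' = (if fst p0 \<ge> a then a-(D-R) else a-R)"
    define c' where "c' = (if snd p0 \<ge> b then b-(D-R) else b-R)"
    have "enclosing_cross S d' c' D"
      unfolding enclosing_cross_def
    proof (intro conjI ballI)
      show "0 \<le> D" by (rule D0)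
      fix q assume q: "q \<in> S"
      have h1: "min \<bar>fst p0-a\<bar> \<bar>snd p0-b\<bar> = R" using p0 by (simp add: rr_def)
      have h2: "min \<bar>fst q-a\<bar> \<bar>snd q-b\<bar> \<le> R" using Rge[OF q] by (simp add: rr_def)
      have h3: "min (\<bar>fst p0 - fst q\<bar> + \<bar>snd p0 - snd q\<bar>) (R + min \<bar>fst q-a\<bar> \<bar>snd q-b\<bar>) \<le> D"
        using Dp[OF p0(1) q] p0(2) by (simp add: rr_def l1dist_def)
      show "d' \<le> fst q \<and> fst q \<le> d' + D \<or> c' \<le> snd q \<and> snd q \<le> c' + D"
        unfolding d'_def c'_def using cover_aux[OF h1 h2 h3] False by linarith
    qed
    thus ?thesis by blast
  qed
  thus ?thesis using sm unfolding smallest_enclosing_cross_def D_def by blast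
qed

lemma part1_ab:
  assumes fin: "finite S" and ne: "S \<noteq> {}" and v: "v > 1"
    and sm: "smallest_enclosing_cross S d c w"
  shows "tt_diameter v (d + w/2) (c + w/2) S \<le> (2 + 1/v) * tt_diameter v a b S"
proof (rule tt_diam_le[OF fin ne])
  fix p q assume p: "p \<in> S" and q: "q \<in> S"
  define D where "D = tt_diameter v a b S"
  have v1: "v \<ge> 1" using v by simp
  have wD: "w \<le> D" using w_le[OF fin ne v1 sm] D_def by simp
  have lD: "l1dist p q / v \<le> D" using travel_ge_div[OF v1, of p q a b] tt_diam_ge[OF fin p q, of v a b] D_def
    by linarith
  hence lD': "l1dist p q \<le> v * D" using v by (simp add: divide_le_eq mult.commute)
  have enc: "enclosing_cross S d c w" using sm by (simp add: smallest_enclosing_cross_def)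
  have cov: "\<bar>fst x - (d + w/2)\<bar> \<le> w/2 \<or> \<bar>snd x - (c + w/2)\<bar> \<le> w/2" if "x \<in> S" for x
  proof -
    have "d \<le> fst x \<and> fst x \<le> d + w \<or> c \<le> snd x \<and> snd x \<le> c + w"
      using enc that unfolding enclosing_cross_def by blast
    thus ?thesis by linarith
  qed
  have "travel_time v (d + w/2) (c + w/2) p q \<le> 2*(w/2) + (2*(w/2) + l1dist p q)/v"
    by (rule med_any[OF v cov[OF p] cov[OF q]])
  also have "\<dots> \<le> D + (D + v * D) / v"
    using wD lD' v by (intro add_mono divide_right_mono) auto
  also have "\<dots> = (2 + 1/v) * D" using v by (simp add: field_simps)
  finally show "travel_time v (d + w/2) (c + w/2) p q \<le> (2 + 1/v) * tt_diameter v a b S"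
    using D_def by simp
qed

lemma part1:
  assumes fin: "finite S" and ne: "S \<noteq> {}" and v: "v > 1"
    and sm: "smallest_enclosing_cross S d c w"
  shows "tt_diameter v (d + w/2) (c + w/2) S \<le> (2 + 1/v) * opt_diameter v S"
proof -
  have pos: "2 + 1/v > 0" using v by (simp add: add_pos_pos)
  have "tt_diameter v (d + w/2) (c + w/2) S / (2 + 1/v) \<le> opt_diameter v S"
    unfolding opt_diameter_def
  proof (rule cInf_greatest)
    show "{tt_diameter v a b S |a b. True} \<noteq> {}" by blast
    fix x assume "x \<in> {tt_diameter v a b S |a b. True}"
    then obtain a b where x: "x = tt_diameter v a b S" by blast
    show "tt_diameter v (d + w/2) (c + w/2) S / (2 + 1/v) \<le> x"
      using part1_ab[OF fin ne v sm, of a b] pos x by (simp add: divide_le_eq mult.commute)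
  qed
  thus ?thesis using pos by (simp add: divide_le_eq mult.commute)
qed




lemma route_d: "v > 1 \<Longrightarrow> travel_time v a b p q \<le> l1dist p q"
proof -
  assume v: "v > 1"
  have "travel_time v a b p q \<le> path_time v a b [p, q]" by (rule travel_upper) (use v in auto)
  also have "\<dots> \<le> l1dist p q" by (simp add: path_time_def step_le)
  finally show ?thesis .
qed

lemma route_V: "v > 1 \<Longrightarrow> travel_time v a b p q \<le> \<bar>fst p - a\<bar> + \<bar>fst q - a\<bar> + \<bar>snd p - snd q\<bar>/v"
proof -
  assume v: "v > 1"
  obtain px py qx qy where P: "p = (px,py)" and Q: "q = (qx,qy)" by (cases p, cases q) auto
  have "travel_time v a b p q \<le> path_time v a b [p, (a,py), (a,qy), q]"
    by (rule travel_upper) (use v P Q in auto)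
  also have "\<dots> \<le> \<bar>px - a\<bar> + \<bar>py - qy\<bar>/v + \<bar>qx - a\<bar>"
    unfolding path3 using step_le[of v a b p "(a,py)"] step_hw[of v "(a,py)" a "(a,qy)" b]
      step_le[of v a b "(a,qy)" q] v P Q by (simp add: l1dist_def abs_minus_commute)
  finally show ?thesis using P Q by simp
qed

lemma route_H: "v > 1 \<Longrightarrow> travel_time v a b p q \<le> \<bar>snd p - b\<bar> + \<bar>snd q - b\<bar> + \<bar>fst p - fst q\<bar>/v"
proof -
  assume v: "v > 1"
  obtain px py qx qy where P: "p = (px,py)" and Q: "q = (qx,qy)" by (cases p, cases q) auto
  have "travel_time v a b p q \<le> path_time v a b [p, (px,b), (qx,b), q]"
    by (rule travel_upper) (use v P Q in auto)
  also have "\<dots> \<le> \<bar>py - b\<bar> + \<bar>px - qx\<bar>/v + \<bar>qy - b\<bar>"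
    unfolding path3 using step_le[of v a b p "(px,b)"] step_hw[of v "(px,b)" a "(qx,b)" b]
      step_le[of v a b "(qx,b)" q] v P Q by (simp add: l1dist_def abs_minus_commute)
  finally show ?thesis using P Q by simp
qed

lemma route_VH: "v > 1 \<Longrightarrow> travel_time v a b p q \<le> \<bar>fst p - a\<bar> + \<bar>snd p - b\<bar>/v + \<bar>fst q - a\<bar>/v + \<bar>snd q - b\<bar>"
proof -
  assume v: "v > 1"
  obtain px py qx qy where P: "p = (px,py)" and Q: "q = (qx,qy)" by (cases p, cases q) auto
  have "travel_time v a b p q \<le> path_time v a b [p, (a,py), (a,b), (qx,b), q]"
    by (rule travel_upper) (use v P Q in auto)
  also have "\<dots> \<le> \<bar>px - a\<bar> + \<bar>py - b\<bar>/v + \<bar>a - qx\<bar>/v + \<bar>qy - b\<bar>"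
    unfolding path4 using step_le[of v a b p "(a,py)"] step_hw[of v "(a,py)" a "(a,b)" b]
      step_hw[of v "(a,b)" a "(qx,b)" b]
      step_le[of v a b "(qx,b)" q] v P Q by (simp add: l1dist_def abs_minus_commute)
  finally show ?thesis using P Q by (simp add: abs_minus_commute)
qed

lemma route_HV: "v > 1 \<Longrightarrow> travel_time v a b p q \<le> \<bar>snd p - b\<bar> + \<bar>fst p - a\<bar>/v + \<bar>snd q - b\<bar>/v + \<bar>fst q - a\<bar>"
proof -
  assume v: "v > 1"
  obtain px py qx qy where P: "p = (px,py)" and Q: "q = (qx,qy)" by (cases p, cases q) auto
  have "travel_time v a b p q \<le> path_time v a b [p, (px,b), (a,b), (a,qy), q]"
    by (rule travel_upper) (use v P Q in auto)
  also have "\<dots> \<le> \<bar>py - b\<bar> + \<bar>px - a\<bar>/v + \<bar>b - qy\<bar>/v + \<bar>qx - a\<bar>"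
    unfolding path4 using step_le[of v a b p "(px,b)"] step_hw[of v "(px,b)" a "(a,b)" b]
      step_hw[of v "(a,b)" a "(a,qy)" b]
      step_le[of v a b "(a,qy)" q] v P Q by (simp add: l1dist_def abs_minus_commute)
  finally show ?thesis using P Q by (simp add: abs_minus_commute)
qed

lemma div_le_self: "v \<ge> 1 \<Longrightarrow> x \<ge> 0 \<Longrightarrow> x / v \<le> (x::real)"
  by (simp add: divide_le_eq mult_le_cancel_left1)

lemma div_tri: "v > 0 \<Longrightarrow> \<bar>x - z\<bar> / v \<le> \<bar>x - y\<bar> / v + \<bar>y - (z::real)\<bar> / v"
proof -
  assume v: "v > 0"
  have "\<bar>x - z\<bar> \<le> \<bar>x - y\<bar> + \<bar>y - z\<bar>" by simp
  hence "\<bar>x - z\<bar> / v \<le> (\<bar>x - y\<bar> + \<bar>y - z\<bar>) / v" using v by (simp add: divide_right_mono)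
  thus ?thesis by (simp add: add_divide_distrib)
qed


lemma GG_ge_routes:
  assumes v: "v \<ge> 1"
  shows "min (min (\<bar>fst p - a\<bar> + \<bar>fst q - a\<bar> + \<bar>snd p - snd q\<bar>/v)
                  (\<bar>snd p - b\<bar> + \<bar>snd q - b\<bar> + \<bar>fst p - fst q\<bar>/v))
             (min (\<bar>fst p - a\<bar> + \<bar>snd p - b\<bar>/v + \<bar>fst q - a\<bar>/v + \<bar>snd q - b\<bar>)
                  (\<bar>snd p - b\<bar> + \<bar>fst p - a\<bar>/v + \<bar>snd q - b\<bar>/v + \<bar>fst q - a\<bar>))
         \<le> GG v a b p q" (is "min (min ?V ?H) (min ?VH ?HV) \<le> _")
proof (rule GG_ge)
  fix u w assume u: "u \<in> hw a b" and w: "w \<in> hw a b"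
  obtain px py qx qy u1 u2 w1 w2 where P: "p = (px,py)" and Q: "q = (qx,qy)" and U: "u = (u1,u2)" and W: "w = (w1,w2)"
    by (cases p, cases q, cases u, cases w) auto
  have v0: "v > 0" using v by simp
  have c: "cost v p u w q = \<bar>px - u1\<bar> + \<bar>py - u2\<bar> + (\<bar>u1 - w1\<bar>/v + \<bar>u2 - w2\<bar>/v) + \<bar>w1 - qx\<bar> + \<bar>w2 - qy\<bar>"
    using P Q U W by (simp add: cost_def l1dist_def add_divide_distrib)
  note d1 = div_le_self[OF v, of "\<bar>py - u2\<bar>"] div_le_self[OF v, of "\<bar>w2 - qy\<bar>"]
            div_le_self[OF v, of "\<bar>px - u1\<bar>"] div_le_self[OF v, of "\<bar>w1 - qx\<bar>"]
  have nn: "\<bar>u1 - w1\<bar>/v \<ge> 0" "\<bar>u2 - w2\<bar>/v \<ge> 0" using v0 by auto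
  have "u1 = a \<or> u2 = b" "w1 = a \<or> w2 = b" using u w U W by (auto simp: hw_def)
  then consider "u1 = a" "w1 = a" | "u2 = b" "w2 = b" | "u1 = a" "w2 = b" | "u2 = b" "w1 = a" by blast
  then show "min (min ?V ?H) (min ?VH ?HV) \<le> cost v p u w q"
  proof cases
    case 1
    have t: "\<bar>py - qy\<bar>/v \<le> \<bar>py - u2\<bar>/v + \<bar>u2 - w2\<bar>/v + \<bar>w2 - qy\<bar>/v"
      using div_tri[OF v0, of py qy u2] div_tri[OF v0, of u2 qy w2] by linarith
    have e: "\<bar>w1 - qx\<bar> = \<bar>qx - a\<bar>" using 1 by (simp add: abs_minus_commute)
    have "?V \<le> cost v p u w q" unfolding c using t d1 nn e 1 P Q by simp
    then show ?thesis by (rule order_trans[rotated]) (meson min.cobounded1 min.cobounded2 min.coboundedI1 min.coboundedI2)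
  next
    case 2
    have t: "\<bar>px - qx\<bar>/v \<le> \<bar>px - u1\<bar>/v + \<bar>u1 - w1\<bar>/v + \<bar>w1 - qx\<bar>/v"
      using div_tri[OF v0, of px qx u1] div_tri[OF v0, of u1 qx w1] by linarith
    have e: "\<bar>w2 - qy\<bar> = \<bar>qy - b\<bar>" using 2 by (simp add: abs_minus_commute)
    have "?H \<le> cost v p u w q" unfolding c using t d1 nn e 2 P Q by simp
    then show ?thesis by (rule order_trans[rotated]) (meson min.cobounded1 min.cobounded2 min.coboundedI1 min.coboundedI2)
  next
    case 3
    have t1: "\<bar>py - b\<bar>/v \<le> \<bar>py - u2\<bar>/v + \<bar>u2 - b\<bar>/v" using div_tri[OF v0, of py b u2] .
    have t2: "\<bar>qx - a\<bar>/v \<le> \<bar>a - w1\<bar>/v + \<bar>w1 - qx\<bar>/v"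
      using div_tri[OF v0, of a qx w1] by (simp add: abs_minus_commute)
    have e: "\<bar>w2 - qy\<bar> = \<bar>qy - b\<bar>" "\<bar>u2 - w2\<bar> = \<bar>u2 - b\<bar>" "\<bar>u1 - w1\<bar> = \<bar>a - w1\<bar>" "\<bar>px - u1\<bar> = \<bar>px - a\<bar>"
      using 3 by (simp_all add: abs_minus_commute)
    have "?VH \<le> cost v p u w q" unfolding c e using t1 t2 d1 P Q by simp
    then show ?thesis by (rule order_trans[rotated]) (meson min.cobounded1 min.cobounded2 min.coboundedI1 min.coboundedI2)
  next
    case 4
    have t1: "\<bar>px - a\<bar>/v \<le> \<bar>px - u1\<bar>/v + \<bar>u1 - a\<bar>/v" using div_tri[OF v0, of px a u1] .
    have t2: "\<bar>qy - b\<bar>/v \<le> \<bar>b - w2\<bar>/v + \<bar>w2 - qy\<bar>/v"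
      using div_tri[OF v0, of b qy w2] by (simp add: abs_minus_commute)
    have e: "\<bar>w1 - qx\<bar> = \<bar>qx - a\<bar>" "\<bar>u1 - w1\<bar> = \<bar>u1 - a\<bar>" "\<bar>u2 - w2\<bar> = \<bar>b - w2\<bar>" "\<bar>py - u2\<bar> = \<bar>py - b\<bar>"
      using 4 by (simp_all add: abs_minus_commute)
    have "?HV \<le> cost v p u w q" unfolding c e using t1 t2 d1 P Q by simp
    then show ?thesis by (rule order_trans[rotated]) (meson min.cobounded1 min.cobounded2 min.coboundedI1 min.coboundedI2)
  qed
qed


lemma travel_ge_routes:
  assumes v: "v \<ge> 1"
  shows "min (l1dist p q) (min (min (\<bar>fst p - a\<bar> + \<bar>fst q - a\<bar> + \<bar>snd p - snd q\<bar>/v)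
                  (\<bar>snd p - b\<bar> + \<bar>snd q - b\<bar> + \<bar>fst p - fst q\<bar>/v))
             (min (\<bar>fst p - a\<bar> + \<bar>snd p - b\<bar>/v + \<bar>fst q - a\<bar>/v + \<bar>snd q - b\<bar>)
                  (\<bar>snd p - b\<bar> + \<bar>fst p - a\<bar>/v + \<bar>snd q - b\<bar>/v + \<bar>fst q - a\<bar>)))
         \<le> travel_time v a b p q"
proof -
  have "min (l1dist p q) (min (min (\<bar>fst p - a\<bar> + \<bar>fst q - a\<bar> + \<bar>snd p - snd q\<bar>/v)
                  (\<bar>snd p - b\<bar> + \<bar>snd q - b\<bar> + \<bar>fst p - fst q\<bar>/v))
             (min (\<bar>fst p - a\<bar> + \<bar>snd p - b\<bar>/v + \<bar>fst q - a\<bar>/v + \<bar>snd q - b\<bar>)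
                  (\<bar>snd p - b\<bar> + \<bar>fst p - a\<bar>/v + \<bar>snd q - b\<bar>/v + \<bar>fst q - a\<bar>))) \<le> Lx v a b p q"
    unfolding Lx_def by (rule min.mono[OF order_refl GG_ge_routes[OF v]])
  also have "\<dots> \<le> travel_time v a b p q" by (rule travel_ge_Lx[OF v])
  finally show ?thesis .
qed




lemma part2:
  fixes v :: real
  assumes v3: "v \<ge> sqrt 3"
  shows "\<exists>(S::point set) d c w. finite S \<and> card S \<ge> 3 \<and>
               smallest_enclosing_cross S d c w \<and>
               tt_diameter v (d + w/2) (c + w/2) S \<ge> (2 - 1/(v+2)) * opt_diameter v S"
proof -
  have s3: "1 < sqrt (3::real)" by (simp add: real_less_rsqrt)
  have v1: "v > 1" using v3 s3 by linarith
  have v0: "v > 0" using v1 by linarith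
  have vsq: "3 \<le> v * v"
  proof -
    have "sqrt 3 * sqrt 3 \<le> v * v" using v3 v0 by (intro mult_mono) auto
    thus ?thesis by simp
  qed
  define A :: point where "A = (-(v+2), 2)"
  define B :: point where "B = (0, v+4)"
  define E1 :: point where "E1 = (1, 1)"
  define E2 :: point where "E2 = (1, 3)"
  define E3 :: point where "E3 = (-1, 0)"
  define S where "S = {A, B, E1, E2, E3}"
  have fin: "finite S" by (simp add: S_def)
  have ne: "S \<noteq> {}" by (simp add: S_def)
  have card: "card S \<ge> 3"
  proof -
    have "card {E1, E2, E3} = 3" by (simp add: E1_def E2_def E3_def)
    moreover have "card {E1, E2, E3} \<le> card S" by (rule card_mono[OF fin]) (auto simp: S_def)
    ultimately show ?thesis by simp
  qed
  have sm: "smallest_enclosing_cross S 0 0 2"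
    unfolding smallest_enclosing_cross_def
  proof (intro conjI allI impI)
    show "enclosing_cross S 0 0 2"
      unfolding enclosing_cross_def S_def A_def B_def E1_def E2_def E3_def using v0 by auto
    fix d' c' w' assume enc: "enclosing_cross S d' c' w'"
    have hA: "(d' \<le> -(v+2) \<and> -(v+2) \<le> d'+w') \<or> (c' \<le> 2 \<and> 2 \<le> c'+w')"
      using enc by (simp add: enclosing_cross_def S_def A_def)
    have hB: "(d' \<le> 0 \<and> 0 \<le> d'+w') \<or> (c' \<le> v+4 \<and> v+4 \<le> c'+w')"
      using enc by (simp add: enclosing_cross_def S_def B_def)
    have h1: "(d' \<le> 1 \<and> 1 \<le> d'+w') \<or> (c' \<le> 1 \<and> 1 \<le> c'+w')"
      using enc by (simp add: enclosing_cross_def S_def E1_def)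
    have h2: "(d' \<le> 1 \<and> 1 \<le> d'+w') \<or> (c' \<le> 3 \<and> 3 \<le> c'+w')"
      using enc by (simp add: enclosing_cross_def S_def E2_def)
    have h3: "(d' \<le> -1 \<and> -1 \<le> d'+w') \<or> (c' \<le> 0 \<and> 0 \<le> c'+w')"
      using enc by (simp add: enclosing_cross_def S_def E3_def)
    show "2 \<le> w'"
    proof (rule ccontr)
      assume "\<not> 2 \<le> w'"
      hence w2: "w' < 2" by simp
      show False using hA hB h1 h2 h3 w2 v1 by (smt (verit))
    qed
  qed
  have low: "4 + 6/v \<le> travel_time v 1 1 A B"
  proof -
    have e1: "l1dist A B = 2*v + 4" using v0 by (simp add: l1dist_def A_def B_def abs_of_nonneg)
    have e2: "\<bar>fst A - 1\<bar> + \<bar>fst B - 1\<bar> + \<bar>snd A - snd B\<bar>/v = v + 4 + (v+2)/v"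
      using v0 by (simp add: A_def B_def abs_of_nonneg)
    have e3: "\<bar>snd A - 1\<bar> + \<bar>snd B - 1\<bar> + \<bar>fst A - fst B\<bar>/v = v + 4 + (v+2)/v"
      using v0 by (simp add: A_def B_def abs_of_nonneg)
    have e4: "\<bar>fst A - 1\<bar> + \<bar>snd A - 1\<bar>/v + \<bar>fst B - 1\<bar>/v + \<bar>snd B - 1\<bar> = 2*v + 6 + 2/v"
      using v0 by (simp add: A_def B_def abs_of_nonneg)
    have e5: "\<bar>snd A - 1\<bar> + \<bar>fst A - 1\<bar>/v + \<bar>snd B - 1\<bar>/v + \<bar>fst B - 1\<bar> = 2 + 2*(v+3)/v"
      using v0 by (simp add: A_def B_def abs_of_nonneg field_simps)
    have i1: "4 + 6/v \<le> 2*v + 4" using v0 vsq by (simp add: field_simps)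
    have c1: "v * 3 \<le> v * (v * v)" using mult_left_mono[OF vsq, of v] v0 by simp
    have c2: "v * 1 \<le> v * v" using mult_left_mono[of 1 v v] v0 v1 by simp
    have c3: "4 \<le> (v + 1) * v" using vsq v1 by (simp add: algebra_simps)
    have c4: "4/v \<le> v + 1" using c3 v0 by (simp add: divide_le_eq)
    have c5: "(v+2)/v = 1 + 2/v" "6/v = 4/v + 2/v" using v0 by (simp_all add: field_simps)
    have i2: "4 + 6/v \<le> v + 4 + (v+2)/v" using c4 c5 by linarith
    have i4: "4 + 6/v \<le> 2*v + 6 + 2/v" using c4 c5 v1 by linarith
    have i5: "4 + 6/v \<le> 2 + 2*(v+3)/v" using v0 by (simp add: field_simps)
    have "4 + 6/v \<le> min (l1dist A B) (min (min (\<bar>fst A - 1\<bar> + \<bar>fst B - 1\<bar> + \<bar>snd A - snd B\<bar>/v)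
                  (\<bar>snd A - 1\<bar> + \<bar>snd B - 1\<bar> + \<bar>fst A - fst B\<bar>/v))
             (min (\<bar>fst A - 1\<bar> + \<bar>snd A - 1\<bar>/v + \<bar>fst B - 1\<bar>/v + \<bar>snd B - 1\<bar>)
                  (\<bar>snd A - 1\<bar> + \<bar>fst A - 1\<bar>/v + \<bar>snd B - 1\<bar>/v + \<bar>fst B - 1\<bar>)))"
      unfolding e1 e2 e3 e4 e5 using i1 i2 i4 i5 by simp
    also have "\<dots> \<le> travel_time v 1 1 A B" using travel_ge_routes[where v=v and p=A and q=B and a=1 and b=1] v1 by simp
    finally show ?thesis .
  qed
  have med: "4 + 6/v \<le> tt_diameter v 1 1 S"
    using low tt_diam_ge[OF fin, of A B v 1 1] by (simp add: S_def)
  have bdd: "bdd_below {tt_diameter v a b S | a b. True}"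
  proof -
    have "0 \<le> tt_diameter v a b S" for a b
      using travel_nonneg[OF v0, of a b A A] tt_diam_ge[OF fin, of A A v a b] by (simp add: S_def)
    thus ?thesis unfolding bdd_below_def by blast
  qed
  have opt1: "opt_diameter v S \<le> tt_diameter v 0 2 S"
    unfolding opt_diameter_def by (rule cInf_lower[OF _ bdd]) blast
  have pairs: "travel_time v 0 2 p q \<le> 2 + 4/v" if "p \<in> S" "q \<in> S" for p q
  proof -
    have k: "0 < 1/v" "1/v < 1" using v0 v1 by auto
    have AB: "travel_time v 0 2 A B \<le> 2 + 4/v"
    proof -
      have "travel_time v 0 2 A B \<le> \<bar>snd A - 2\<bar> + \<bar>fst A - 0\<bar>/v + \<bar>snd B - 2\<bar>/v + \<bar>fst B - 0\<bar>"
        by (rule route_HV[OF v1])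
      also have "\<dots> = 2*(v+2)/v" using v0 by (simp add: A_def B_def abs_of_nonneg)
      finally show ?thesis using v0 by (simp add: field_simps)
    qed
    have E1A: "travel_time v 0 2 E1 A \<le> 2 + 4/v"
    proof -
      have "travel_time v 0 2 E1 A \<le> \<bar>snd E1 - 2\<bar> + \<bar>snd A - 2\<bar> + \<bar>fst E1 - fst A\<bar>/v"
        by (rule route_H[OF v1])
      also have "\<dots> = 1 + (v+3)/v" using v0 by (simp add: A_def E1_def abs_of_nonneg)
      finally show ?thesis using v0 by (simp add: field_simps)
    qed
    have E2A: "travel_time v 0 2 E2 A \<le> 2 + 4/v"
    proof -
      have "travel_time v 0 2 E2 A \<le> \<bar>snd E2 - 2\<bar> + \<bar>snd A - 2\<bar> + \<bar>fst E2 - fst A\<bar>/v"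
        by (rule route_H[OF v1])
      also have "\<dots> = 1 + (v+3)/v" using v0 by (simp add: A_def E2_def abs_of_nonneg)
      finally show ?thesis using v0 by (simp add: field_simps)
    qed
    have E3A: "travel_time v 0 2 E3 A \<le> 2 + 4/v"
    proof -
      have "travel_time v 0 2 E3 A \<le> \<bar>fst E3 - 0\<bar> + \<bar>snd E3 - 2\<bar>/v + \<bar>fst A - 0\<bar>/v + \<bar>snd A - 2\<bar>"
        by (rule route_VH[OF v1])
      also have "\<dots> = 2 + 4/v" using v0 by (simp add: A_def E3_def abs_of_nonneg field_simps)
      finally show ?thesis .
    qed
    have E1B: "travel_time v 0 2 E1 B \<le> 2 + 4/v"
    proof -
      have "travel_time v 0 2 E1 B \<le> \<bar>fst E1 - 0\<bar> + \<bar>fst B - 0\<bar> + \<bar>snd E1 - snd B\<bar>/v"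
        by (rule route_V[OF v1])
      also have "\<dots> = 1 + (v+3)/v" using v0 by (simp add: B_def E1_def abs_of_nonneg)
      finally show ?thesis using v0 by (simp add: field_simps)
    qed
    have E2B: "travel_time v 0 2 E2 B \<le> 2 + 4/v"
    proof -
      have "travel_time v 0 2 E2 B \<le> \<bar>fst E2 - 0\<bar> + \<bar>fst B - 0\<bar> + \<bar>snd E2 - snd B\<bar>/v"
        by (rule route_V[OF v1])
      also have "\<dots> = 1 + (v+1)/v" using v0 by (simp add: B_def E2_def abs_of_nonneg)
      finally show ?thesis using v0 by (simp add: field_simps)
    qed
    have E3B: "travel_time v 0 2 E3 B \<le> 2 + 4/v"
    proof -
      have "travel_time v 0 2 E3 B \<le> \<bar>fst E3 - 0\<bar> + \<bar>fst B - 0\<bar> + \<bar>snd E3 - snd B\<bar>/v"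
        by (rule route_V[OF v1])
      also have "\<dots> = 1 + (v+4)/v" using v0 by (simp add: B_def E3_def abs_of_nonneg)
      finally show ?thesis using v0 by (simp add: field_simps)
    qed
    have E12: "travel_time v 0 2 E1 E2 \<le> 2 + 4/v"
    proof -
      have "travel_time v 0 2 E1 E2 \<le> l1dist E1 E2" by (rule route_d[OF v1])
      also have "\<dots> = 2" by (simp add: E1_def E2_def l1dist_def)
      finally have "travel_time v 0 2 E1 E2 \<le> 2" .
      moreover have "0 \<le> 4/v" using v0 by simp
      ultimately show ?thesis by linarith
    qed
    have E13: "travel_time v 0 2 E1 E3 \<le> 2 + 4/v"
    proof -
      have "travel_time v 0 2 E1 E3 \<le> \<bar>fst E1 - 0\<bar> + \<bar>fst E3 - 0\<bar> + \<bar>snd E1 - snd E3\<bar>/v"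
        by (rule route_V[OF v1])
      also have "\<dots> = 2 + 1/v" by (simp add: E1_def E3_def)
      finally show ?thesis using v0 by (simp add: field_simps)
    qed
    have E23: "travel_time v 0 2 E2 E3 \<le> 2 + 4/v"
    proof -
      have "travel_time v 0 2 E2 E3 \<le> \<bar>fst E2 - 0\<bar> + \<bar>fst E3 - 0\<bar> + \<bar>snd E2 - snd E3\<bar>/v"
        by (rule route_V[OF v1])
      also have "\<dots> = 2 + 3/v" by (simp add: E2_def E3_def)
      finally show ?thesis using v0 by (simp add: field_simps)
    qed
    have diag: "travel_time v 0 2 x x \<le> 2 + 4/v" for x
    proof -
      have "travel_time v 0 2 x x \<le> l1dist x x" by (rule route_d[OF v1])
      also have "\<dots> = 0" by (simp add: l1dist_def)
      finally have "travel_time v 0 2 x x \<le> 0" .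
      moreover have "0 \<le> 4/v" using v0 by simp
      ultimately show ?thesis by linarith
    qed
    have sym: "travel_time v 0 2 x y \<le> 2 + 4/v \<Longrightarrow> travel_time v 0 2 y x \<le> 2 + 4/v" for x y
      using travel_sym[of v 0 2 x y] by simp
    from that show ?thesis unfolding S_def
      using AB E1A E2A E3A E1B E2B E3B E12 E13 E23 diag sym[OF AB] sym[OF E1A] sym[OF E2A] sym[OF E3A]
        sym[OF E1B] sym[OF E2B] sym[OF E3B] sym[OF E12] sym[OF E13] sym[OF E23]
      by blast
  qed
  have opt2: "tt_diameter v 0 2 S \<le> 2 + 4/v"
    by (rule tt_diam_le[OF fin ne pairs])
  have coef: "0 \<le> 2 - 1/(v+2)" using v0 by (simp add: field_simps)
  have "(2 - 1/(v+2)) * opt_diameter v S \<le> (2 - 1/(v+2)) * (2 + 4/v)"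
    using opt1 opt2 coef by (intro mult_left_mono) auto
  also have "\<dots> = 4 + 6/v"
  proof -
    have q1: "2 - 1/(v+2) = (2*v+3)/(v+2)" using v0 by (simp add: field_simps)
    have q2: "2 + 4/v = 2*(v+2)/v" using v0 by (simp add: field_simps)
    have nz: "v + 2 \<noteq> 0" "v \<noteq> 0" using v0 by auto
    have q3: "(2*v+3)/(v+2) * (2*(v+2)/v) = (2*v+3)*2/v"
    proof -
      have "(2*v+3)/(v+2) * (2*(v+2)/v) = ((2*v+3) * (2*(v+2))) / ((v+2) * v)"
        by (rule times_divide_times_eq)
      also have "\<dots> = (((2*v+3)*2) * (v+2)) / (v * (v+2))" by (simp add: algebra_simps)
      also have "\<dots> = (2*v+3)*2/v" using nz by (rule_tac mult_divide_mult_cancel_right) auto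
      finally show ?thesis .
    qed
    have q4: "(2*v+3)*2/v = 4 + 6/v" using v0 by (simp add: field_simps)
    show ?thesis unfolding q1 q2 q3 q4 ..
  qed
  also have "\<dots> \<le> tt_diameter v 1 1 S" by (rule med)
  finally have fin_ineq: "(2 - 1/(v+2)) * opt_diameter v S \<le> tt_diameter v (0 + 2/2) (0 + 2/2) S" by simp
  show ?thesis using fin card sm fin_ineq by blast
qed



theorem lemma3:
  shows "(\<forall>(S::point set) v d c w. finite S \<and> card S \<ge> 3 \<and> v > 1 \<and>
            smallest_enclosing_cross S d c w \<longrightarrow>
            tt_diameter v (d + w/2) (c + w/2) S \<le> (2 + 1/v) * opt_diameter v S)
       \<and> (\<forall>v::real. v \<ge> sqrt 3 \<longrightarrow>
            (\<exists>(S::point set) d c w. finite S \<and> card S \<ge> 3 \<and>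
               smallest_enclosing_cross S d c w \<and>
               tt_diameter v (d + w/2) (c + w/2) S \<ge> (2 - 1/(v+2)) * opt_diameter v S))"
proof (intro conjI allI impI)
  fix S :: "point set" and v d c w :: real
  assume h: "finite S \<and> card S \<ge> 3 \<and> v > 1 \<and> smallest_enclosing_cross S d c w"
  have ne: "S \<noteq> {}" using h by auto
  show "tt_diameter v (d + w/2) (c + w/2) S \<le> (2 + 1/v) * opt_diameter v S"
    using part1[OF _ ne] h by blast
next
  fix v :: real
  assume "v \<ge> sqrt 3"
  thus "\<exists>(S::point set) d c w. finite S \<and> card S \<ge> 3 \<and>
               smallest_enclosing_cross S d c w \<and>
               tt_diameter v (d + w/2) (c + w/2) S \<ge> (2 - 1/(v+2)) * opt_diameter v S"
    by (rule part2)
qed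

end
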